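(* Let $h,w\ge 4$ and $G=K_w(U)\sqcap K_h$ where $U\subsetneq V(K_w)$ and $|U|=r$ (so $r\ne w$). Then $Z(G)\le wh-(h+r)$.
   Context: All graphs are finite, simple and undirected. Zero forcing: given a graph $G$ and a set $S\subseteq V(G)$ of initially filled vertices, the color change rule says that if a filled vertex $v$ has exactly one unfilled neighbor $u$, then $v$ forces $u$ to become filled. $S$ is a zero forcing set if repeatedly applying this rule eventually fills every vertex of $G$. The zero forcing number $Z(G)$ is the minimum cardinality of a zero forcing set of $G$. $K_n$ is the complete graph on vertex set $\{1,\dots,n\}$. Generalized hierarchical product: for graphs $W,H$ and $U\subseteq V(W)$ (the root set), $W(U)\sqcap H$ is the graph with vertex set $V(W)\times V(H)$ in which $(x_1,y_1)$ and $(x_2,y_2)$ are adjacent iff either ($x_1=x_2\in U$ and $y_1y_2\in E(H)$) or ($y_1=y_2$ and $x_1x_2\in E(W)$). *)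

theory Defs
  imports Main
begin

text \<open>A finite simple graph is given by a vertex set V and a symmetric, irreflexive
adjacency relation E (only its restriction to V matters).\<close>

definition force_step :: "'a set \<Rightarrow> ('a \<Rightarrow> 'a \<Rightarrow> bool) \<Rightarrow> 'a set \<Rightarrow> 'a set \<Rightarrow> bool" where
  "force_step V E F F' \<longleftrightarrow>
     (\<exists>v u. v \<in> F \<and> u \<in> V \<and> u \<notin> F \<and> E v u \<and>
        (\<forall>u'. u' \<in> V \<and> E v u' \<and> u' \<notin> F \<longrightarrow> u' = u) \<and> F' = insert u F)"

definition zero_forcing_set :: "'a set \<Rightarrow> ('a \<Rightarrow> 'a \<Rightarrow> bool) \<Rightarrow> 'a set \<Rightarrow> bool" where
  "zero_forcing_set V E S \<longleftrightarrow> S \<subseteq> V \<and> (force_step V E)\<^sup>*\<^sup>* S V"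

definition zero_forcing_number :: "'a set \<Rightarrow> ('a \<Rightarrow> 'a \<Rightarrow> bool) \<Rightarrow> nat" where
  "zero_forcing_number V E = Min {card S | S. zero_forcing_set V E S}"

definition K_verts :: "nat \<Rightarrow> nat set" where "K_verts n = {1..n}"
definition K_adj :: "nat \<Rightarrow> nat \<Rightarrow> nat \<Rightarrow> bool" where
  "K_adj n x y \<longleftrightarrow> x \<in> {1..n} \<and> y \<in> {1..n} \<and> x \<noteq> y"

definition hp_verts :: "'a set \<Rightarrow> 'b set \<Rightarrow> ('a \<times> 'b) set" where
  "hp_verts VW VH = VW \<times> VH"
definition hp_adj :: "('a \<Rightarrow> 'a \<Rightarrow> bool) \<Rightarrow> 'a set \<Rightarrow> ('b \<Rightarrow> 'b \<Rightarrow> bool) \<Rightarrow> ('a \<times> 'b) \<Rightarrow> ('a \<times> 'b) \<Rightarrow> bool" where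
  "hp_adj EW U EH p q \<longleftrightarrow>
     (fst p = fst q \<and> fst p \<in> U \<and> EH (snd p) (snd q)) \<or> (snd p = snd q \<and> EW (fst p) (fst q))"

end

theory Submission
  imports Defs
begin

lemma force_many:
  assumes "finite T" "T \<subseteq> V" "T \<inter> F = {}"
    and "\<forall>t\<in>T. \<exists>v\<in>F. E v t \<and> (\<forall>u'. u' \<in> V \<and> E v u' \<and> u' \<notin> F \<longrightarrow> u' = t)"
  shows "(force_step V E)\<^sup>*\<^sup>* F (F \<union> T)"
  using assms
proof (induction T rule: finite_induct)
  case empty
  then show ?case by simp
next
  case (insert t T)
  have IH: "(force_step V E)\<^sup>*\<^sup>* F (F \<union> T)" using insert by auto
  from insert.prems obtain v where v: "v \<in> F" "E v t"
    "\<forall>u'. u' \<in> V \<and> E v u' \<and> u' \<notin> F \<longrightarrow> u' = t" by auto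
  have "force_step V E (F \<union> T) (F \<union> insert t T)"
    unfolding force_step_def
    apply (rule exI[of _ v], rule exI[of _ t])
    using v insert by auto
  then show ?case using IH by (meson rtranclp.rtrancl_into_rtrancl)
qed

lemma zfn_le:
  assumes "zero_forcing_set V E S" "finite V"
  shows "zero_forcing_number V E \<le> card S"
proof -
  have "{card S |S. zero_forcing_set V E S} \<subseteq> card ` Pow V"
    unfolding zero_forcing_set_def by auto
  then have "finite {card S |S. zero_forcing_set V E S}"
    using assms(2) by (rule finite_subset[OF _ finite_imageI[OF finite_Pow_iff[THEN iffD2]]])
  then show ?thesis unfolding zero_forcing_number_def
    using assms(1) by (intro Min_le) auto
qed

theorem mainTheorem10:
  fixes w h r :: nat and U :: "nat set"
  assumes "w \<ge> 4" and "h \<ge> 4" and "U \<subset> K_verts w" and "card U = r"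
  shows "zero_forcing_number (hp_verts (K_verts w) (K_verts h)) (hp_adj (K_adj w) U (K_adj h))
           \<le> w * h - (h + r)"
proof -
  define V where "V = {1..w} \<times> {1..h}"
  define E where "E = hp_adj (K_adj w) U (K_adj h)"
  have VV: "hp_verts (K_verts w) (K_verts h) = V" unfolding V_def hp_verts_def K_verts_def by simp
  have Usub: "U \<subseteq> {1..w}" using assms(3) unfolding K_verts_def by auto
  have finU: "finite U" using Usub finite_subset by blast
  obtain a where a: "a \<in> {1..w}" "a \<notin> U" using assms(3) unfolding K_verts_def by blast
  have finV: "finite V" unfolding V_def by simp
  have cardV: "card V = w * h" unfolding V_def by simp
  have Eiff: "E p q \<longleftrightarrow> (fst p = fst q \<and> fst p \<in> U \<and> snd p \<in> {1..h} \<and> snd q \<in> {1..h} \<and> snd p \<noteq> snd q)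
      \<or> (snd p = snd q \<and> fst p \<in> {1..w} \<and> fst q \<in> {1..w} \<and> fst p \<noteq> fst q)" for p q
    unfolding E_def hp_adj_def K_adj_def by auto
  show ?thesis
  proof (cases "U = {}")
    case True
    define c where "c = (if a = 1 then 2 else (1::nat))"
    have c: "c \<in> {1..w}" "c \<noteq> a" using assms(1) unfolding c_def by auto
    define T where "T = {c} \<times> {1..h}"
    define S where "S = V - T"
    have TV: "T \<subseteq> V" unfolding T_def V_def using c by auto
    have "(force_step V E)\<^sup>*\<^sup>* S (S \<union> T)"
    proof (rule force_many)
      show "finite T" unfolding T_def by simp
      show "T \<subseteq> V" by (rule TV)
      show "T \<inter> S = {}" unfolding S_def by auto
      show "\<forall>t\<in>T. \<exists>v\<in>S. E v t \<and> (\<forall>u'. u' \<in> V \<and> E v u' \<and> u' \<notin> S \<longrightarrow> u' = t)"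
      proof
        fix t assume t: "t \<in> T"
        then obtain y where y: "t = (c, y)" "y \<in> {1..h}" unfolding T_def by auto
        show "\<exists>v\<in>S. E v t \<and> (\<forall>u'. u' \<in> V \<and> E v u' \<and> u' \<notin> S \<longrightarrow> u' = t)"
          apply (rule bexI[of _ "(a, y)"])
          using y c a True unfolding S_def T_def V_def Eiff by auto
      qed
    qed
    moreover have "S \<union> T = V" unfolding S_def using TV by auto
    ultimately have "zero_forcing_set V E S" unfolding zero_forcing_set_def S_def by auto
    then have "zero_forcing_number V E \<le> card S" using finV by (rule zfn_le)
    moreover have "card S = w * h - h"
      unfolding S_def using TV finV cardV by (simp add: card_Diff_subset T_def card_cartesian_product)
    ultimately show ?thesis using VV True assms(4) unfolding E_def by simp
  next
    case False
    then obtain c where cU: "c \<in> U" by auto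
    have c: "c \<in> {1..w}" "c \<noteq> a" using cU Usub a by auto
    define B where "B = {c} \<times> {1..h} \<union> (insert a (U - {c})) \<times> {1}"
    define S where "S = V - B"
    have BV: "B \<subseteq> V" unfolding B_def V_def using c a Usub assms(2) by auto
    define T1 where "T1 = {c} \<times> {2..h}"
    define T2 where "T2 = U \<times> {1::nat}"
    define T3 where "T3 = {(a, 1::nat)}"
    have s1: "(force_step V E)\<^sup>*\<^sup>* S (S \<union> T1)"
    proof (rule force_many)
      show "finite T1" unfolding T1_def by simp
      show "T1 \<subseteq> V" unfolding T1_def V_def using c by auto
      show "T1 \<inter> S = {}" unfolding S_def B_def T1_def by auto
      show "\<forall>t\<in>T1. \<exists>v\<in>S. E v t \<and> (\<forall>u'. u' \<in> V \<and> E v u' \<and> u' \<notin> S \<longrightarrow> u' = t)"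
      proof
        fix t assume t: "t \<in> T1"
        then obtain y where y: "t = (c, y)" "y \<in> {2..h}" unfolding T1_def by auto
        show "\<exists>v\<in>S. E v t \<and> (\<forall>u'. u' \<in> V \<and> E v u' \<and> u' \<notin> S \<longrightarrow> u' = t)"
          apply (rule bexI[of _ "(a, y)"])
          using y c a unfolding S_def B_def V_def Eiff by auto
      qed
    qed
    have s2: "(force_step V E)\<^sup>*\<^sup>* (S \<union> T1) ((S \<union> T1) \<union> T2)"
    proof (rule force_many)
      show "finite T2" unfolding T2_def using finU by simp
      show "T2 \<subseteq> V" unfolding T2_def V_def using Usub assms(2) by auto
      show "T2 \<inter> (S \<union> T1) = {}" unfolding S_def B_def T1_def T2_def using assms(2) by auto
      show "\<forall>t\<in>T2. \<exists>v\<in>S \<union> T1. E v t \<and> (\<forall>u'. u' \<in> V \<and> E v u' \<and> u' \<notin> S \<union> T1 \<longrightarrow> u' = t)"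
      proof
        fix t assume t: "t \<in> T2"
        then obtain u where u: "t = (u, 1)" "u \<in> U" unfolding T2_def by auto
        have uw: "u \<in> {1..w}" using u Usub by auto
        show "\<exists>v\<in>S \<union> T1. E v t \<and> (\<forall>u'. u' \<in> V \<and> E v u' \<and> u' \<notin> S \<union> T1 \<longrightarrow> u' = t)"
          apply (rule bexI[of _ "(u, 2)"])
          using u uw c a assms(2) unfolding S_def B_def V_def T1_def Eiff by auto
      qed
    qed
    have s3: "(force_step V E)\<^sup>*\<^sup>* ((S \<union> T1) \<union> T2) (((S \<union> T1) \<union> T2) \<union> T3)"
    proof (rule force_many)
      show "finite T3" unfolding T3_def by simp
      show "T3 \<subseteq> V" unfolding T3_def V_def using a assms(2) by auto
      show "T3 \<inter> (S \<union> T1 \<union> T2) = {}" unfolding S_def B_def T1_def T2_def T3_def using a c by auto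
      show "\<forall>t\<in>T3. \<exists>v\<in>S \<union> T1 \<union> T2. E v t \<and> (\<forall>u'. u' \<in> V \<and> E v u' \<and> u' \<notin> S \<union> T1 \<union> T2 \<longrightarrow> u' = t)"
        unfolding T3_def
        apply (simp, rule bexI[of _ "(c, 1)"])
        using cU c a assms(2) unfolding S_def B_def V_def T1_def T2_def Eiff by auto
    qed
    have fin: "S \<union> T1 \<union> T2 \<union> T3 = V"
      unfolding S_def B_def T1_def T2_def T3_def V_def using a c cU Usub assms(2) by auto
    have "(force_step V E)\<^sup>*\<^sup>* S V" using s1 s2 s3 fin by (metis rtranclp_trans)
    then have "zero_forcing_set V E S" unfolding zero_forcing_set_def S_def by auto
    then have "zero_forcing_number V E \<le> card S" using finV by (rule zfn_le)
    moreover have "card B = h + r"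
    proof -
      have r0: "card U > 0" using cU finU by (auto simp: card_gt_0_iff)
      have c1: "card (U - {c}) = card U - 1" using cU finU by (simp add: card_Diff_singleton)
      have "card (insert a (U - {c})) = Suc (card (U - {c}))"
        by (rule card_insert_disjoint) (use a finU in auto)
      then have hX: "card (insert a (U - {c})) = r" using c1 r0 assms(4) by linarith
      have dj: "({c} \<times> {1..h}) \<inter> (insert a (U - {c})) \<times> {1} = {}" using c by auto
      have "card B = card ({c} \<times> {1..h}) + card ((insert a (U - {c})) \<times> {1::nat})"
        unfolding B_def by (rule card_Un_disjoint) (use finU dj in auto)
      also have "card ({c} \<times> {1..h}) = h" by (simp add: card_cartesian_product)
      also have "card ((insert a (U - {c})) \<times> {1::nat}) = r"
        by (simp only: card_cartesian_product hX card_1_singleton_iff) simp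
      finally show ?thesis .
    qed
    moreover have "card S = w * h - card B"
      unfolding S_def using card_Diff_subset[OF finite_subset[OF BV finV] BV] cardV by simp
    ultimately show ?thesis using VV unfolding E_def by simp
  qed
qed

end
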